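(* Let $k\in[-\pi,\pi)$ and let $w\in\ell^2(\mathbb Z;\mathbb C^6)$ satisfy $\hat H_{\mathrm{II}}(k)w=Ew$ for some real constant $E$. Then $$\hat H_{\mathrm{II}}(k)\hat R(k)w=\hat R(k)\hat H_{\mathrm{II}}(k)w=E\,\hat R(k)w,\qquad \hat R(k)\hat R(k)w=w,\qquad \hat H_{\mathrm{II}}(k)\hat Vw=-E\,\hat Vw.$$
   Context: Parameters $b_\pm>0$, $\delta_\pm$ with $b_\pm+\delta_\pm>0$, $c>0$. For $n\in\mathbb Z$ let $b_n=b_+$ ($n\ge0$), $b_n=b_-$ ($n\le-1$); $c_n=b_++\delta_+$ ($n\ge0$), $c_{-1}=c$, $c_n=b_-+\delta_-$ ($n\le-2$); $d_n=b_++\delta_+$ ($n\ge0$), $d_{-1}=d_{-2}=c$, $d_n=b_-+\delta_-$ ($n\le-3$). $\hat H_{\mathrm{II}}(k)$ acts on $w=\{w(n)\}_{n\in\mathbb Z}$, $w(n)=(w_{j,n})_{j=1}^6$, by $(\hat H_{\mathrm{II}}(k)w)_{1,n}=-b_nw_{4,n}-b_nw_{5,n}-c_ne^{-ik}w_{6,n+1}$, $(\hat H_{\mathrm{II}}(k)w)_{2,n}=-b_nw_{4,n}-d_{n-2}e^{ik}w_{5,n-2}-b_nw_{6,n}$, $(\hat H_{\mathrm{II}}(k)w)_{3,n}=-c_nw_{4,n+1}-b_nw_{5,n}-b_nw_{6,n}$, $(\hat H_{\mathrm{II}}(k)w)_{4,n}=-b_nw_{1,n}-b_nw_{2,n}-c_{n-1}w_{3,n-1}$,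 $(\hat H_{\mathrm{II}}(k)w)_{5,n}=-b_nw_{1,n}-d_ne^{-ik}w_{2,n+2}-b_nw_{3,n}$, $(\hat H_{\mathrm{II}}(k)w)_{6,n}=-c_{n-1}e^{ik}w_{1,n-1}-b_nw_{2,n}-b_nw_{3,n}$. Operators: $[\hat R(k)w](n)=e^{ink}\begin{pmatrix}J&0\\0&J\end{pmatrix}\overline{w(n)}$ with $J=\begin{pmatrix}0&0&1\\0&1&0\\1&0&0\end{pmatrix}$, and $(\hat Vw)(n)=\begin{pmatrix}I_3&0\\0&-I_3\end{pmatrix}w(n)$. *)

theory Defs
  imports "HOL-Analysis.Analysis"
begin

definition vec6 :: "complex \<Rightarrow> complex \<Rightarrow> complex \<Rightarrow> complex \<Rightarrow> complex \<Rightarrow> complex \<Rightarrow> complex ^ 6" where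
  "vec6 a1 a2 a3 a4 a5 a6 = (\<chi> i. if i = 1 then a1 else if i = 2 then a2 else if i = 3 then a3
      else if i = 4 then a4 else if i = 5 then a5 else a6)"

definition bseq :: "real \<Rightarrow> real \<Rightarrow> int \<Rightarrow> real" where
  "bseq bp bm n = (if n \<ge> 0 then bp else bm)"

definition cseq :: "real \<Rightarrow> real \<Rightarrow> real \<Rightarrow> real \<Rightarrow> real \<Rightarrow> int \<Rightarrow> real" where
  "cseq bp bm dp dm c n = (if n \<ge> 0 then bp + dp else if n = -1 then c else bm + dm)"

definition dseq :: "real \<Rightarrow> real \<Rightarrow> real \<Rightarrow> real \<Rightarrow> real \<Rightarrow> int \<Rightarrow> real" where
  "dseq bp bm dp dm c n = (if n \<ge> 0 then bp + dp else if n = -1 \<or> n = -2 then c else bm + dm)"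

definition H_II :: "real \<Rightarrow> real \<Rightarrow> real \<Rightarrow> real \<Rightarrow> real \<Rightarrow> real \<Rightarrow> (int \<Rightarrow> complex ^ 6) \<Rightarrow> (int \<Rightarrow> complex ^ 6)" where
  "H_II bp bm dp dm c k w = (\<lambda>n.
     let b = (\<lambda>m. complex_of_real (bseq bp bm m));
         cc = (\<lambda>m. complex_of_real (cseq bp bm dp dm c m));
         d = (\<lambda>m. complex_of_real (dseq bp bm dp dm c m));
         e = exp (\<i> * complex_of_real k);
         em = exp (- \<i> * complex_of_real k)
     in vec6
       (- b n * w n $ 4 - b n * w n $ 5 - cc n * em * w (n+1) $ 6)
       (- b n * w n $ 4 - d (n-2) * e * w (n-2) $ 5 - b n * w n $ 6)
       (- cc n * w (n+1) $ 4 - b n * w n $ 5 - b n * w n $ 6)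
       (- b n * w n $ 1 - b n * w n $ 2 - cc (n-1) * w (n-1) $ 3)
       (- b n * w n $ 1 - d n * em * w (n+2) $ 2 - b n * w n $ 3)
       (- cc (n-1) * e * w (n-1) $ 1 - b n * w n $ 2 - b n * w n $ 3))"

definition R_op :: "real \<Rightarrow> (int \<Rightarrow> complex ^ 6) \<Rightarrow> (int \<Rightarrow> complex ^ 6)" where
  "R_op k w = (\<lambda>n. exp (\<i> * of_int n * complex_of_real k) *s
     vec6 (cnj (w n $ 3)) (cnj (w n $ 2)) (cnj (w n $ 1))
          (cnj (w n $ 6)) (cnj (w n $ 5)) (cnj (w n $ 4)))"

definition V_op :: "(int \<Rightarrow> complex ^ 6) \<Rightarrow> (int \<Rightarrow> complex ^ 6)" where
  "V_op w = (\<lambda>n. vec6 (w n $ 1) (w n $ 2) (w n $ 3) (- w n $ 4) (- w n $ 5) (- w n $ 6))"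

definition l2 :: "(int \<Rightarrow> complex ^ 6) \<Rightarrow> bool" where
  "l2 w \<longleftrightarrow> (\<lambda>n. (norm (w n))\<^sup>2) summable_on UNIV"

end

theory Submission
  imports Defs
begin
lemma exhaust_6:
  fixes x :: 6
  shows "x = 1 \<or> x = 2 \<or> x = 3 \<or> x = 4 \<or> x = 5 \<or> x = 6"
proof (induct x)
  case (of_int z)
  then have "z = 0 \<or> z = 1 \<or> z = 2 \<or> z = 3 \<or> z = 4 \<or> z = 5" by fastforce
  then show ?case by auto
qed
lemma forall_6: "(\<forall>i::6. P i) \<longleftrightarrow> P 1 \<and> P 2 \<and> P 3 \<and> P 4 \<and> P 5 \<and> P 6"
proof
  assume "P 1 \<and> P 2 \<and> P 3 \<and> P 4 \<and> P 5 \<and> P 6"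
  show "\<forall>i::6. P i"
  proof
    fix i :: 6
    show "P i" using exhaust_6[of i] \<open>P 1 \<and> P 2 \<and> P 3 \<and> P 4 \<and> P 5 \<and> P 6\<close> by (elim disjE) simp_all
  qed
qed simp
lemma vec6_eq: "(v::complex^6) = u \<longleftrightarrow> v$1=u$1 \<and> v$2=u$2 \<and> v$3=u$3 \<and> v$4=u$4 \<and> v$5=u$5 \<and> v$6=u$6"
  by (simp only: vec_eq_iff forall_6)
lemma vec6_nth[simp]:
 "vec6 a1 a2 a3 a4 a5 a6 $ 1 = a1" "vec6 a1 a2 a3 a4 a5 a6 $ 2 = a2"
 "vec6 a1 a2 a3 a4 a5 a6 $ 3 = a3" "vec6 a1 a2 a3 a4 a5 a6 $ 4 = a4"
 "vec6 a1 a2 a3 a4 a5 a6 $ 5 = a5" "vec6 a1 a2 a3 a4 a5 a6 $ 6 = a6"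
  by (simp_all add: vec6_def)
lemma cnj1: "cnj (exp (\<i> * complex_of_real k)) = exp (- \<i> * complex_of_real k)"
  by (simp add: exp_cnj)
lemma cnj2: "cnj (exp (- \<i> * complex_of_real k)) = exp (\<i> * complex_of_real k)"
  by (simp add: exp_cnj)
lemma cnj3: "exp (\<i> * of_int n * complex_of_real k) * cnj (exp (\<i> * of_int n * complex_of_real k)) = 1"
  by (simp add: exp_cnj exp_add[symmetric])
lemma sh1: "exp (\<i> * of_int (n+1) * complex_of_real k) = exp (\<i> * of_int n * complex_of_real k) * exp (\<i> * complex_of_real k)"
  by (simp add: exp_add[symmetric] algebra_simps)
lemma sh2: "exp (\<i> * of_int (n+2) * complex_of_real k) = exp (\<i> * of_int n * complex_of_real k) * exp (\<i> * complex_of_real k) * exp (\<i> * complex_of_real k)"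
  by (simp add: exp_add[symmetric] algebra_simps)
lemma sh3: "exp (\<i> * of_int (n-1) * complex_of_real k) = exp (\<i> * of_int n * complex_of_real k) * exp (- \<i> * complex_of_real k)"
  by (simp add: exp_add[symmetric] algebra_simps)
lemma sh4: "exp (\<i> * of_int (n-2) * complex_of_real k) = exp (\<i> * of_int n * complex_of_real k) * exp (- \<i> * complex_of_real k) * exp (- \<i> * complex_of_real k)"
  by (simp add: exp_add[symmetric] algebra_simps)
lemma zzi: "exp (\<i> * complex_of_real k) * exp (- \<i> * complex_of_real k) = 1"
  by (simp add: exp_add[symmetric])

lemmas shs = sh1 sh2 sh3 sh4 cnj1 cnj2 complex_cnj_mult complex_cnj_diff complex_cnj_minus complex_cnj_complex_of_real complex_cnj_add

lemma einv: "exp (- \<i> * complex_of_real k) = inverse (exp (\<i> * complex_of_real k))"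
  by (simp add: exp_minus[symmetric])
lemma einv2: "cnj (exp (\<i> * of_int n * complex_of_real k)) = inverse (exp (\<i> * of_int n * complex_of_real k))"
  by (simp add: exp_cnj exp_minus[symmetric])

lemma canc:
  fixes a e x :: complex
  shows "a * exp (- \<i> * complex_of_real k) * (e * exp (\<i> * complex_of_real k) * x) = e * (a * x)"
    "a * exp (\<i> * complex_of_real k) * (e * exp (- \<i> * complex_of_real k) * exp (- \<i> * complex_of_real k) * x) = e * (a * exp (- \<i> * complex_of_real k) * x)"
    "a * exp (- \<i> * complex_of_real k) * (e * exp (\<i> * complex_of_real k) * exp (\<i> * complex_of_real k) * x) = e * (a * exp (\<i> * complex_of_real k) * x)"
    "a * exp (\<i> * complex_of_real k) * (e * exp (- \<i> * complex_of_real k) * x) = e * (a * x)"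
  using zzi[of k] by (simp_all add: algebra_simps)

lemma HR: "H_II bp bm dp dm c k (R_op k w) n = R_op k (H_II bp bm dp dm c k w) n"
  unfolding H_II_def R_op_def Let_def vec6_eq
  apply (simp only: vec6_nth vector_scalar_mult_def vec_lambda_beta shs)
  apply (simp only: canc)
  apply (simp add: algebra_simps)
  done
lemma einvx: "exp (z::complex) * (inverse (exp z) * x) = x"
  by (simp add: mult.assoc[symmetric] right_inverse)

lemma RR: "R_op k (R_op k w) n = w n"
  unfolding R_op_def vec6_eq
  apply (simp only: vec6_nth vector_scalar_mult_def vec_lambda_beta complex_cnj_mult complex_cnj_cnj einv2)
  apply (simp only: einvx)
  done


lemma HV:
  "H_II bp bm dp dm c k (V_op w) n $ 1 = - (H_II bp bm dp dm c k w n $ 1)"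
  "H_II bp bm dp dm c k (V_op w) n $ 2 = - (H_II bp bm dp dm c k w n $ 2)"
  "H_II bp bm dp dm c k (V_op w) n $ 3 = - (H_II bp bm dp dm c k w n $ 3)"
  "H_II bp bm dp dm c k (V_op w) n $ 4 = H_II bp bm dp dm c k w n $ 4"
  "H_II bp bm dp dm c k (V_op w) n $ 5 = H_II bp bm dp dm c k w n $ 5"
  "H_II bp bm dp dm c k (V_op w) n $ 6 = H_II bp bm dp dm c k w n $ 6"
  unfolding H_II_def V_op_def Let_def
  by (simp_all only: vec6_nth) (simp_all add: algebra_simps)

theorem proposition11:
  fixes bp bm dp dm c k E :: real and w :: "int \<Rightarrow> complex ^ 6"
  assumes "bp > 0" "bm > 0" "bp + dp > 0" "bm + dm > 0" "c > 0"
    and "k \<in> {-pi..<pi}"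
    and "l2 w"
    and "H_II bp bm dp dm c k w = (\<lambda>n. complex_of_real E *s w n)"
  shows "H_II bp bm dp dm c k (R_op k w) = R_op k (H_II bp bm dp dm c k w)
     \<and> R_op k (H_II bp bm dp dm c k w) = (\<lambda>n. complex_of_real E *s R_op k w n)
     \<and> R_op k (R_op k w) = w
     \<and> H_II bp bm dp dm c k (V_op w) = (\<lambda>n. complex_of_real (- E) *s V_op w n)"
proof (intro conjI)
  note eq = assms(8)
  have eqc: "H_II bp bm dp dm c k w n $ j = complex_of_real E * w n $ j" for n j
    using eq by simp
  show "H_II bp bm dp dm c k (R_op k w) = R_op k (H_II bp bm dp dm c k w)"
    by (rule ext, rule HR)
  show "R_op k (R_op k w) = w" by (rule ext, rule RR)
  show "R_op k (H_II bp bm dp dm c k w) = (\<lambda>n. complex_of_real E *s R_op k w n)"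
  proof
    fix n
    show "R_op k (H_II bp bm dp dm c k w) n = complex_of_real E *s R_op k w n"
      unfolding R_op_def vec6_eq
      by (simp only: vec6_nth vector_scalar_mult_def vec_lambda_beta eqc complex_cnj_mult complex_cnj_complex_of_real) (simp_all add: algebra_simps)
  qed
  show "H_II bp bm dp dm c k (V_op w) = (\<lambda>n. complex_of_real (- E) *s V_op w n)"
  proof
    fix n
    show "H_II bp bm dp dm c k (V_op w) n = complex_of_real (- E) *s V_op w n"
      unfolding vec6_eq HV eqc
      by (simp add: V_op_def)
  qed
qed

end
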